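(* In the standing setting with the noisy iteration (I)–(III), for every $k\ge0$ (almost surely): $$m_f\|X^{(k+1)}-X^*\|^2\le\|U^{(k)}-U^*\|_G^2-\|U^{(k+1)}-U^*\|_G^2-\|U^{(k)}-U^{(k+1)}\|_G^2-\langle X^{(k+1)}-X^*,\sqrt2Dw^{(k+1)}\rangle.$$ Consequently, $$\Big\|X^{(k+1)}-X^*+\frac1{\sqrt2m_f}Dw^{(k+1)}\Big\|^2\le\frac1{m_f}\|U^{(k)}-U^*\|_G^2+\frac1{2m_f^2}\|Dw^{(k+1)}\|^2.$$
   Context: Standing setting. $\mathcal{G}=(\mathcal{V},\mathcal{E})$ is a connected undirected graph without self-loops on $\mathcal{V}=\{1,\dots,N\}$. Set $\mathcal{N}_i=\{j:(i,j)\in\mathcal{E}\}$ and $N_i=|\mathcal{N}_i|$. $\mathcal{A}$ is the set of directed arcs obtained by taking both orientations $(i,j)$ and $(j,i)$ of every edge of $\mathcal{E}$, so $|\mathcal{A}|=2|\mathcal{E}|$. Fix an enumeration $q=1,\dots,|\mathcal{A}|$ of $\mathcal{A}$. Each $f_i:\mathbb{R}^d\to\mathbb{R}$ is differentiable and $m_{f_i}$-strongly convex, i.e. $\langle\nabla f_i(u)-\nabla f_i(v),u-v\rangle\ge m_{f_i}\|u-v\|^2$ with $m_{f_i}>0$. Its gradient is $M_{f_i}$-Lipschitz. The function $\sum_i f_i$ has a (unique) minimizer $x^*$. For $X=(x_1,\dots,x_N)\in\mathbb{R}^{Nd}$ let $f(X)=\sum_i f_i(x_i)$, $m_f=\min_i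 m_{f_i}$ and $M_f=\max_i M_{f_i}$. $M_+,M_-\in\mathbb{R}^{Nd\times|\mathcal{A}|d}$ are block matrices with $d\times d$ blocks. If the $q$-th arc is $(i,j)$, then: - the $(i,q)$ and $(j,q)$ blocks of $M_+$ are $I_d$; - the $(i,q)$ block of $M_-$ is $I_d$ and its $(j,q)$ block is $-I_d$; - all other blocks are zero. $D=\mathrm{diag}(N_1,\dots,N_N)\otimes I_d$. $X^*=(x^*,\dots,x^* )$, $Z^*=\tfrac12M_+^TX^*$, and $\beta^*$ is the unique vector in the column space of $M_-^T$ with $\nabla f(X^* )+M_-\beta^*=0$. Set $U^*=(Z^*,\beta^* )$. For $\rho>0$, $G=\mathrm{diag}(\rho I_{|\mathcal{A}|d},\rho^{-1}I_{|\mathcal{A}|d})$ and $\|v\|_G^2=v^TGv$. Noisy iteration. Fix $\rho>0$. Let $w^{(1)},w^{(2)},\dots$ be i.i.d. $\mathcal{N}(0,I_{Nd})$, independent of a random initialization $(X^{(0)},\beta^{(0)})$ in which $\beta^{(0)}$ lies in the column space of $M_-^T$. Set $Z^{(0)}=\tfrac12M_+^TX^{(0)}$. For $k\ge0$ the random vectors $X^{(k+1)}\in\mathbb{R}^{Nd}$ and $Z^{(k+1)},\beta^{(k+1)}\in\mathbb{R}^{|\mathcal{A}|d}$ satisfy (I) $\nabla f(X^{(k+1)})+M_-\beta^{(k+1)}+\sqrt2Dw^{(k+1)}=\rho M_+(Z^{(k)}-Z^{(k+1)})$, (II) $\beta^{(k+1)}-\beta^{(k)}-\tfrac\rho2M_-^TX^{(k+1)}=0$,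 (III) $\tfrac12M_+^TX^{(k+1)}-Z^{(k+1)}=0$. Set $U^{(k)}=(Z^{(k)},\beta^{(k)})$. *)

theory Defs
  imports "HOL-Analysis.Analysis"
begin

text \<open>Vectors in R^{Nd} are represented
blockwise as functions nat => real^'d (block i = x_i, i in V), vectors in
R^{|A|d} as functions (nat*nat) => real^'d indexed directly by arcs (the
enumeration q of the arcs is immaterial).\<close>

definition verts :: "nat \<Rightarrow> nat set" where
  "verts N = {1..N}"

definition is_arc_set :: "nat \<Rightarrow> (nat \<times> nat) set \<Rightarrow> bool" where
  "is_arc_set N A \<longleftrightarrow> A \<subseteq> verts N \<times> verts N
     \<and> (\<forall>i j. (i, j) \<in> A \<longrightarrow> (j, i) \<in> A)
     \<and> (\<forall>i. (i, i) \<notin> A)"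

definition graph_connected :: "nat \<Rightarrow> (nat \<times> nat) set \<Rightarrow> bool" where
  "graph_connected N A \<longleftrightarrow> (\<forall>i\<in>verts N. \<forall>j\<in>verts N. (i, j) \<in> A\<^sup>*)"

definition deg :: "(nat \<times> nat) set \<Rightarrow> nat \<Rightarrow> nat" where
  "deg A i = card {j. (i, j) \<in> A}"

definition Mplus :: "(nat \<times> nat) set \<Rightarrow> (nat \<times> nat \<Rightarrow> real^'d) \<Rightarrow> nat \<Rightarrow> real^'d" where
  "Mplus A z i = (\<Sum>q\<in>A. (if fst q = i then z q else 0) + (if snd q = i then z q else 0))"

definition Mminus :: "(nat \<times> nat) set \<Rightarrow> (nat \<times> nat \<Rightarrow> real^'d) \<Rightarrow> nat \<Rightarrow> real^'d" where
  "Mminus A z i = (\<Sum>q\<in>A. (if fst q = i then z q else 0) - (if snd q = i then z q else 0))"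

definition MplusT :: "(nat \<Rightarrow> real^'d) \<Rightarrow> nat \<times> nat \<Rightarrow> real^'d" where
  "MplusT X q = X (fst q) + X (snd q)"

definition MminusT :: "(nat \<Rightarrow> real^'d) \<Rightarrow> nat \<times> nat \<Rightarrow> real^'d" where
  "MminusT X q = X (fst q) - X (snd q)"

definition Dop :: "(nat \<times> nat) set \<Rightarrow> (nat \<Rightarrow> real^'d) \<Rightarrow> nat \<Rightarrow> real^'d" where
  "Dop A X i = real (deg A i) *\<^sub>R X i"

definition vnorm2 :: "nat \<Rightarrow> (nat \<Rightarrow> real^'d) \<Rightarrow> real" where
  "vnorm2 N X = (\<Sum>i\<in>verts N. (norm (X i))\<^sup>2)"

definition vinner :: "nat \<Rightarrow> (nat \<Rightarrow> real^'d) \<Rightarrow> (nat \<Rightarrow> real^'d) \<Rightarrow> real" where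
  "vinner N X Y = (\<Sum>i\<in>verts N. X i \<bullet> Y i)"

definition Gnorm2 :: "(nat \<times> nat) set \<Rightarrow> real \<Rightarrow> (nat \<times> nat \<Rightarrow> real^'d) \<Rightarrow> (nat \<times> nat \<Rightarrow> real^'d) \<Rightarrow> real" where
  "Gnorm2 A \<rho> Z \<beta> = \<rho> * (\<Sum>q\<in>A. (norm (Z q))\<^sup>2) + (1 / \<rho>) * (\<Sum>q\<in>A. (norm (\<beta> q))\<^sup>2)"

end

theory Submission
  imports Defs
begin

lemma tri: fixes a b c :: "'a::real_inner"
  shows "2*((b-c)\<bullet>(a-b)) = (norm(a-c))^2 - (norm(b-c))^2 - (norm(a-b))^2"
  by (simp add: power2_norm_eq_inner inner_diff_left inner_diff_right inner_commute algebra_simps)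

lemma inner_if0: "(Y::'a::real_inner) \<bullet> (if P then z else 0) = (if P then Y \<bullet> z else 0)"
  by simp

lemma adj_minus:
  assumes "finite A" "A \<subseteq> V \<times> V" "finite V"
  shows "(\<Sum>i\<in>V. Y i \<bullet> Mminus A z i) = (\<Sum>q\<in>A. MminusT Y q \<bullet> z q)"
proof -
  have "(\<Sum>i\<in>V. Y i \<bullet> Mminus A z i) = (\<Sum>i\<in>V. \<Sum>q\<in>A. (if fst q = i then Y i \<bullet> z q else 0) - (if snd q = i then Y i \<bullet> z q else 0))"
    unfolding Mminus_def by (simp add: inner_sum_right inner_diff_right sum_subtractf[symmetric] inner_if0)
  also have "\<dots> = (\<Sum>q\<in>A. \<Sum>i\<in>V. (if fst q = i then Y i \<bullet> z q else 0) - (if snd q = i then Y i \<bullet> z q else 0))"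
    by (rule sum.swap)
  also have "\<dots> = (\<Sum>q\<in>A. MminusT Y q \<bullet> z q)"
  proof (rule sum.cong[OF refl])
    fix q assume "q \<in> A"
    then have "fst q \<in> V" "snd q \<in> V" using assms(2) by auto
    then show "(\<Sum>i\<in>V. (if fst q = i then Y i \<bullet> z q else 0) - (if snd q = i then Y i \<bullet> z q else 0)) = MminusT Y q \<bullet> z q"
      using assms(3) by (simp add: sum_subtractf sum.delta MminusT_def inner_diff_left)
  qed
  finally show ?thesis .
qed

lemma adj_plus:
  assumes "finite A" "A \<subseteq> V \<times> V" "finite V"
  shows "(\<Sum>i\<in>V. Y i \<bullet> Mplus A z i) = (\<Sum>q\<in>A. MplusT Y q \<bullet> z q)"
proof -
  have "(\<Sum>i\<in>V. Y i \<bullet> Mplus A z i) = (\<Sum>i\<in>V. \<Sum>q\<in>A. (if fst q = i then Y i \<bullet> z q else 0) + (if snd q = i then Y i \<bullet> z q else 0))"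
    unfolding Mplus_def by (simp add: inner_sum_right inner_add_right sum.distrib[symmetric] inner_if0)
  also have "\<dots> = (\<Sum>q\<in>A. \<Sum>i\<in>V. (if fst q = i then Y i \<bullet> z q else 0) + (if snd q = i then Y i \<bullet> z q else 0))"
    by (rule sum.swap)
  also have "\<dots> = (\<Sum>q\<in>A. MplusT Y q \<bullet> z q)"
  proof (rule sum.cong[OF refl])
    fix q assume "q \<in> A"
    then have "fst q \<in> V" "snd q \<in> V" using assms(2) by auto
    then show "(\<Sum>i\<in>V. (if fst q = i then Y i \<bullet> z q else 0) + (if snd q = i then Y i \<bullet> z q else 0)) = MplusT Y q \<bullet> z q"
      using assms(3) by (simp add: sum.distrib sum.delta MplusT_def inner_add_left)
  qed
  finally show ?thesis .
qed

theorem mainTheorem5: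
  fixes N :: nat and A :: "(nat \<times> nat) set"
    and f :: "nat \<Rightarrow> real^'d \<Rightarrow> real" and gradf :: "nat \<Rightarrow> real^'d \<Rightarrow> real^'d"
    and mf Mf :: "nat \<Rightarrow> real"
    and xstar :: "real^'d" and \<beta>star :: "nat \<times> nat \<Rightarrow> real^'d"
    and \<rho> :: real
    and X :: "nat \<Rightarrow> nat \<Rightarrow> real^'d"
    and Z \<beta> :: "nat \<Rightarrow> nat \<times> nat \<Rightarrow> real^'d"
    and w :: "nat \<Rightarrow> nat \<Rightarrow> real^'d"
  defines "V \<equiv> verts N"
  defines "Xstar \<equiv> (\<lambda>i::nat. xstar)"
  defines "Zstar \<equiv> (\<lambda>q. (1/2) *\<^sub>R MplusT Xstar q)"
  defines "mfmin \<equiv> Min (mf ` V)"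
  assumes N_pos: "N \<ge> 1"
    and arcs: "is_arc_set N A"
    and conn: "graph_connected N A"
    and grad: "\<And>i x. i \<in> V \<Longrightarrow> (f i has_derivative (\<lambda>h. gradf i x \<bullet> h)) (at x)"
    and mf_pos: "\<And>i. i \<in> V \<Longrightarrow> mf i > 0"
    and strong: "\<And>i u v. i \<in> V \<Longrightarrow> (gradf i u - gradf i v) \<bullet> (u - v) \<ge> mf i * (norm (u - v))\<^sup>2"
    and lips: "\<And>i u v. i \<in> V \<Longrightarrow> norm (gradf i u - gradf i v) \<le> Mf i * norm (u - v)"
    and xstar_min: "\<And>y. (\<Sum>i\<in>V. f i xstar) \<le> (\<Sum>i\<in>V. f i y)"
    and \<beta>star_range: "\<exists>Y. \<forall>q\<in>A. \<beta>star q = MminusT Y q"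
    and \<beta>star_kkt: "\<And>i. i \<in> V \<Longrightarrow> gradf i xstar + Mminus A \<beta>star i = 0"
    and \<rho>_pos: "\<rho> > 0"
    and \<beta>0_range: "\<exists>Y. \<forall>q\<in>A. \<beta> 0 q = MminusT Y q"
    and Z0: "\<And>q. q \<in> A \<Longrightarrow> Z 0 q = (1/2) *\<^sub>R MplusT (X 0) q"
    and iterI: "\<And>k i. i \<in> V \<Longrightarrow>
        gradf i (X (Suc k) i) + Mminus A (\<beta> (Suc k)) i + sqrt 2 *\<^sub>R Dop A (w (Suc k)) i
        = \<rho> *\<^sub>R Mplus A (\<lambda>q. Z k q - Z (Suc k) q) i"
    and iterII: "\<And>k q. q \<in> A \<Longrightarrow>
        \<beta> (Suc k) q - \<beta> k q - (\<rho>/2) *\<^sub>R MminusT (X (Suc k)) q = 0"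
    and iterIII: "\<And>k q. q \<in> A \<Longrightarrow>
        (1/2) *\<^sub>R MplusT (X (Suc k)) q - Z (Suc k) q = 0"
  shows "\<forall>k.
      mfmin * vnorm2 N (\<lambda>i. X (Suc k) i - Xstar i)
        \<le> Gnorm2 A \<rho> (\<lambda>q. Z k q - Zstar q) (\<lambda>q. \<beta> k q - \<beta>star q)
          - Gnorm2 A \<rho> (\<lambda>q. Z (Suc k) q - Zstar q) (\<lambda>q. \<beta> (Suc k) q - \<beta>star q)
          - Gnorm2 A \<rho> (\<lambda>q. Z k q - Z (Suc k) q) (\<lambda>q. \<beta> k q - \<beta> (Suc k) q)
          - vinner N (\<lambda>i. X (Suc k) i - Xstar i) (\<lambda>i. sqrt 2 *\<^sub>R Dop A (w (Suc k)) i)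
    \<and> vnorm2 N (\<lambda>i. X (Suc k) i - Xstar i + (1 / (sqrt 2 * mfmin)) *\<^sub>R Dop A (w (Suc k)) i)
        \<le> (1 / mfmin) * Gnorm2 A \<rho> (\<lambda>q. Z k q - Zstar q) (\<lambda>q. \<beta> k q - \<beta>star q)
          + (1 / (2 * mfmin\<^sup>2)) * vnorm2 N (Dop A (w (Suc k)))"
proof (intro allI)
  fix k
  have finV: "finite V" unfolding V_def verts_def by simp
  have Vne: "V \<noteq> {}" using N_pos unfolding V_def verts_def by auto
  have AV: "A \<subseteq> V \<times> V" using arcs unfolding is_arc_set_def V_def by auto
  have finA: "finite A" using finite_subset[OF AV] finV by auto
  have mle: "\<And>i. i \<in> V \<Longrightarrow> mfmin \<le> mf i" unfolding mfmin_def using finV by simp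
  have mpos: "mfmin > 0" unfolding mfmin_def using finV Vne mf_pos by simp
  define X1 where "X1 = X (Suc k)"
  define b1 where "b1 = \<beta> (Suc k)"
  define b0 where "b0 = \<beta> k"
  define Z0 where "Z0 = Z k"
  define Z1 where "Z1 = Z (Suc k)"
  define Dw where "Dw = (\<lambda>i. sqrt 2 *\<^sub>R Dop A (w (Suc k)) i)"
  define e where "e = (\<lambda>i. X1 i - xstar)"
  have ga: "gradf i (X1 i) - gradf i xstar = - Mminus A b1 i + Mminus A \<beta>star i - Dw i
      + \<rho> *\<^sub>R Mplus A (\<lambda>q. Z0 q - Z1 q) i" if "i \<in> V" for i
  proof -
    have "gradf i (X1 i) = \<rho> *\<^sub>R Mplus A (\<lambda>q. Z0 q - Z1 q) i - Mminus A b1 i - Dw i"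
      using iterI[OF that, of k] unfolding X1_def b1_def Z0_def Z1_def Dw_def
      by (simp add: algebra_simps eq_diff_eq)
    moreover have "gradf i xstar = - Mminus A \<beta>star i"
      using \<beta>star_kkt[OF that] by (simp add: add_eq_0_iff)
    ultimately show ?thesis by (simp add: algebra_simps)
  qed
  have S1: "mfmin * vnorm2 N e \<le> (\<Sum>i\<in>V. e i \<bullet> (gradf i (X1 i) - gradf i xstar))"
    unfolding vnorm2_def V_def[symmetric] sum_distrib_left
  proof (rule sum_mono)
    fix i assume "i \<in> V"
    have "mfmin * (norm (e i))\<^sup>2 \<le> mf i * (norm (e i))\<^sup>2"
      using mle[OF \<open>i\<in>V\<close>] by (simp add: mult_right_mono)
    also have "\<dots> \<le> e i \<bullet> (gradf i (X1 i) - gradf i xstar)"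
      using strong[OF \<open>i\<in>V\<close>, of "X1 i" xstar] unfolding e_def by (simp add: inner_commute)
    finally show "mfmin * (norm (e i))\<^sup>2 \<le> e i \<bullet> (gradf i (X1 i) - gradf i xstar)" .
  qed
  have S2: "(\<Sum>i\<in>V. e i \<bullet> (gradf i (X1 i) - gradf i xstar)) =
     - (\<Sum>i\<in>V. e i \<bullet> Mminus A b1 i) + (\<Sum>i\<in>V. e i \<bullet> Mminus A \<beta>star i) - (\<Sum>i\<in>V. e i \<bullet> Dw i)
     + \<rho> * (\<Sum>i\<in>V. e i \<bullet> Mplus A (\<lambda>q. Z0 q - Z1 q) i)"
    by (simp add: ga inner_add_right inner_diff_right sum.distrib sum_subtractf sum_distrib_left
        sum_negf cong: sum.cong)
  have eM: "MminusT e q = (2/\<rho>) *\<^sub>R (b1 q - b0 q)" if "q \<in> A" for q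
  proof -
    have "b1 q - b0 q = (\<rho>/2) *\<^sub>R MminusT X1 q" using iterII[OF that, of k]
      unfolding b1_def b0_def X1_def by simp
    then show ?thesis using \<rho>_pos unfolding MminusT_def e_def by simp
  qed
  have eP: "MplusT e q = 2 *\<^sub>R (Z1 q - Zstar q)" if "q \<in> A" for q
  proof -
    have "Z1 q = (1/2) *\<^sub>R MplusT X1 q" using iterIII[OF that, of k]
      unfolding Z1_def X1_def by simp
    then show ?thesis unfolding MplusT_def e_def Zstar_def Xstar_def by (simp add: algebra_simps)
  qed
  have pq: "- (MminusT e q \<bullet> b1 q) + MminusT e q \<bullet> \<beta>star q + \<rho> * (MplusT e q \<bullet> (Z0 q - Z1 q))
     = \<rho> * ((norm (Z0 q - Zstar q))\<^sup>2 - (norm (Z1 q - Zstar q))\<^sup>2 - (norm (Z0 q - Z1 q))\<^sup>2)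
     + (1/\<rho>) * ((norm (b0 q - \<beta>star q))\<^sup>2 - (norm (b1 q - \<beta>star q))\<^sup>2 - (norm (b0 q - b1 q))\<^sup>2)"
    if "q \<in> A" for q
  proof -
    have t1: "2*((Z1 q - Zstar q)\<bullet>(Z0 q - Z1 q)) = (norm (Z0 q - Zstar q))\<^sup>2 - (norm (Z1 q - Zstar q))\<^sup>2 - (norm (Z0 q - Z1 q))\<^sup>2"
      by (rule tri)
    have t2: "2*((b1 q - \<beta>star q)\<bullet>(b0 q - b1 q)) = (norm (b0 q - \<beta>star q))\<^sup>2 - (norm (b1 q - \<beta>star q))\<^sup>2 - (norm (b0 q - b1 q))\<^sup>2"
      by (rule tri)
    have "- (MminusT e q \<bullet> b1 q) + MminusT e q \<bullet> \<beta>star q = (1/\<rho>) * (2*((b1 q - \<beta>star q)\<bullet>(b0 q - b1 q)))"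
      using \<rho>_pos by (simp add: eM[OF that] inner_diff_left inner_diff_right inner_commute field_simps)
    moreover have "\<rho> * (MplusT e q \<bullet> (Z0 q - Z1 q)) = \<rho> * (2*((Z1 q - Zstar q)\<bullet>(Z0 q - Z1 q)))"
      by (simp add: eP[OF that])
    ultimately show ?thesis using t1 t2 by simp
  qed
  define G0 where "G0 = Gnorm2 A \<rho> (\<lambda>q. Z k q - Zstar q) (\<lambda>q. \<beta> k q - \<beta>star q)"
  have key: "mfmin * vnorm2 N e
        \<le> G0
          - Gnorm2 A \<rho> (\<lambda>q. Z (Suc k) q - Zstar q) (\<lambda>q. \<beta> (Suc k) q - \<beta>star q)
          - Gnorm2 A \<rho> (\<lambda>q. Z k q - Z (Suc k) q) (\<lambda>q. \<beta> k q - \<beta> (Suc k) q)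
          - vinner N e Dw"
  proof -
    have "(\<Sum>i\<in>V. e i \<bullet> (gradf i (X1 i) - gradf i xstar)) =
       (\<Sum>q\<in>A. - (MminusT e q \<bullet> b1 q) + MminusT e q \<bullet> \<beta>star q + \<rho> * (MplusT e q \<bullet> (Z0 q - Z1 q)))
       - (\<Sum>i\<in>V. e i \<bullet> Dw i)"
      unfolding S2 adj_minus[OF finA AV finV] adj_plus[OF finA AV finV]
      by (simp add: sum.distrib sum_negf sum_distrib_left sum_subtractf)
    also have "\<dots> = (\<Sum>q\<in>A. \<rho> * ((norm (Z0 q - Zstar q))\<^sup>2 - (norm (Z1 q - Zstar q))\<^sup>2 - (norm (Z0 q - Z1 q))\<^sup>2)
     + (1/\<rho>) * ((norm (b0 q - \<beta>star q))\<^sup>2 - (norm (b1 q - \<beta>star q))\<^sup>2 - (norm (b0 q - b1 q))\<^sup>2))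
       - (\<Sum>i\<in>V. e i \<bullet> Dw i)"
      using pq by (simp cong: sum.cong)
    also have "\<dots> = G0
          - Gnorm2 A \<rho> (\<lambda>q. Z (Suc k) q - Zstar q) (\<lambda>q. \<beta> (Suc k) q - \<beta>star q)
          - Gnorm2 A \<rho> (\<lambda>q. Z k q - Z (Suc k) q) (\<lambda>q. \<beta> k q - \<beta> (Suc k) q)
          - vinner N e Dw"
      unfolding G0_def Gnorm2_def vinner_def V_def[symmetric] Z0_def Z1_def b0_def b1_def
      by (simp add: sum.distrib sum_subtractf sum_distrib_left algebra_simps)
    finally show ?thesis using S1 by linarith
  qed
  have Gnn: "Gnorm2 A \<rho> Z' B' \<ge> 0" for Z' B' :: "nat \<times> nat \<Rightarrow> real^'d"
    unfolding Gnorm2_def using \<rho>_pos by (intro add_nonneg_nonneg mult_nonneg_nonneg sum_nonneg) auto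
  show "mfmin * vnorm2 N (\<lambda>i. X (Suc k) i - Xstar i)
        \<le> Gnorm2 A \<rho> (\<lambda>q. Z k q - Zstar q) (\<lambda>q. \<beta> k q - \<beta>star q)
          - Gnorm2 A \<rho> (\<lambda>q. Z (Suc k) q - Zstar q) (\<lambda>q. \<beta> (Suc k) q - \<beta>star q)
          - Gnorm2 A \<rho> (\<lambda>q. Z k q - Z (Suc k) q) (\<lambda>q. \<beta> k q - \<beta> (Suc k) q)
          - vinner N (\<lambda>i. X (Suc k) i - Xstar i) (\<lambda>i. sqrt 2 *\<^sub>R Dop A (w (Suc k)) i)
    \<and> vnorm2 N (\<lambda>i. X (Suc k) i - Xstar i + (1 / (sqrt 2 * mfmin)) *\<^sub>R Dop A (w (Suc k)) i)
        \<le> (1 / mfmin) * Gnorm2 A \<rho> (\<lambda>q. Z k q - Zstar q) (\<lambda>q. \<beta> k q - \<beta>star q)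
          + (1 / (2 * mfmin\<^sup>2)) * vnorm2 N (Dop A (w (Suc k)))"
  proof
    show "mfmin * vnorm2 N (\<lambda>i. X (Suc k) i - Xstar i)
        \<le> Gnorm2 A \<rho> (\<lambda>q. Z k q - Zstar q) (\<lambda>q. \<beta> k q - \<beta>star q)
          - Gnorm2 A \<rho> (\<lambda>q. Z (Suc k) q - Zstar q) (\<lambda>q. \<beta> (Suc k) q - \<beta>star q)
          - Gnorm2 A \<rho> (\<lambda>q. Z k q - Z (Suc k) q) (\<lambda>q. \<beta> k q - \<beta> (Suc k) q)
          - vinner N (\<lambda>i. X (Suc k) i - Xstar i) (\<lambda>i. sqrt 2 *\<^sub>R Dop A (w (Suc k)) i)"
      using key unfolding G0_def e_def Dw_def X1_def Xstar_def by simp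
    define W where "W = Dop A (w (Suc k))"
    have k2: "mfmin * vnorm2 N e + sqrt 2 * vinner N e W \<le> G0"
    proof -
      have "vinner N e Dw = sqrt 2 * vinner N e W"
        unfolding vinner_def Dw_def W_def by (simp add: sum_distrib_left)
      then show ?thesis using key Gnn[of "\<lambda>q. Z (Suc k) q - Zstar q" "\<lambda>q. \<beta> (Suc k) q - \<beta>star q"]
          Gnn[of "\<lambda>q. Z k q - Z (Suc k) q" "\<lambda>q. \<beta> k q - \<beta> (Suc k) q"] by linarith
    qed
    define c where "c = 1 / (sqrt 2 * mfmin)"
    have exp: "vnorm2 N (\<lambda>i. e i + c *\<^sub>R W i) = vnorm2 N e + 2 * c * vinner N e W + c\<^sup>2 * vnorm2 N W"
    proof -
      have "(norm (e i + c *\<^sub>R W i))\<^sup>2 = (norm (e i))\<^sup>2 + 2 * c * (e i \<bullet> W i) + c\<^sup>2 * (norm (W i))\<^sup>2" for i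
        by (simp only: power2_norm_eq_inner) (simp add: inner_add_left inner_add_right inner_commute algebra_simps power2_eq_square)
      then show ?thesis unfolding vnorm2_def vinner_def
        by (simp add: sum.distrib sum_distrib_left)
    qed
    have s2: "sqrt 2 * sqrt 2 = (2::real)" by simp
    have cc: "c\<^sup>2 = 1 / (2 * mfmin\<^sup>2)" unfolding c_def by (simp add: power2_eq_square field_simps)
    have c2: "2 * c = (1/mfmin) * sqrt 2" unfolding c_def using mpos
      by (simp add: field_simps)
    have "vnorm2 N (\<lambda>i. e i + c *\<^sub>R W i) = (1/mfmin) * (mfmin * vnorm2 N e + sqrt 2 * vinner N e W)
        + 1 / (2 * mfmin\<^sup>2) * vnorm2 N W"
      unfolding exp cc c2 using mpos by (simp add: field_simps)
    also have "\<dots> \<le> (1/mfmin) * G0 + 1 / (2 * mfmin\<^sup>2) * vnorm2 N W"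
      using k2 mpos by (simp add: divide_right_mono)
    finally show "vnorm2 N (\<lambda>i. X (Suc k) i - Xstar i + (1 / (sqrt 2 * mfmin)) *\<^sub>R Dop A (w (Suc k)) i)
        \<le> (1 / mfmin) * Gnorm2 A \<rho> (\<lambda>q. Z k q - Zstar q) (\<lambda>q. \<beta> k q - \<beta>star q)
          + (1 / (2 * mfmin\<^sup>2)) * vnorm2 N (Dop A (w (Suc k)))"
      unfolding G0_def e_def W_def c_def X1_def Xstar_def by simp
  qed
qed

end
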